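(* For any $U\in(0,1]$, if $f(U)\le\frac{25C}{(\lambda^* )^2}+\frac{g(\lambda^* )}{\epsilon^2}$, then with $L=\sqrt{\frac{C}{C/U^2+(g(U)-1)/\epsilon^2}}$ we have $f(\lambda)\le50f(\lambda^* )$ for every $\lambda\in[L,U]$.
   Context: $\epsilon\in(0,1)$, $K\ge1$, $C>K$, $g:[0,1]\to[1,K]$ non-decreasing, $f(\lambda)=\frac{C}{\lambda^2}+\frac{g(\lambda)}{\epsilon^2}$, and $\lambda^*\in(0,1]$ a minimizer of $f$ over $[0,1]$. *)

theory Defs
  imports Complex_Main
begin

definition fB :: "real \<Rightarrow> real \<Rightarrow> (real \<Rightarrow> real) \<Rightarrow> real \<Rightarrow> real" where
  "fB eps C g lam = C / lam^2 + g lam / eps^2"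

end

theory Submission
  imports Defs
begin

theorem lemmaB6:
  fixes eps K C U lams :: real and g :: "real \<Rightarrow> real"
  assumes eps: "0 < eps" "eps < 1"
    and K: "K \<ge> 1" and CK: "C > K"
    and g_range: "\<And>x. x \<in> {0..1} \<Longrightarrow> g x \<in> {1..K}"
    and g_mono: "mono_on {0..1} g"
    and lam_s: "lams \<in> {0<..1}"
    and lam_min: "\<And>x. x \<in> {0<..1} \<Longrightarrow> fB eps C g lams \<le> fB eps C g x"
    and U: "U \<in> {0<..1}"
    and hU: "fB eps C g U \<le> 25 * C / lams^2 + g lams / eps^2"
  shows "\<forall>lam \<in> {sqrt (C / (C / U^2 + (g U - 1) / eps^2)) .. U}.
           fB eps C g lam \<le> 50 * fB eps C g lams"
proof
  fix lam assume lam: "lam \<in> {sqrt (C / (C / U^2 + (g U - 1) / eps^2)) .. U}"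
  define D where "D = C / U^2 + (g U - 1) / eps^2"
  have C0: "C > 0" using K CK by linarith
  have U0: "U > 0" "U \<le> 1" using U by auto
  have gU: "g U \<ge> 1" "g U \<le> K" using g_range[of U] U0 by auto
  have D1: "C / U^2 > 0" using C0 U0 by simp
  have D2: "(g U - 1) / eps^2 \<ge> 0" using gU eps by simp
  have D0: "D > 0" using D1 D2 unfolding D_def by linarith
  have L0: "sqrt (C / D) > 0" using C0 D0 by simp
  have lamL: "sqrt (C / D) \<le> lam" "lam \<le> U" using lam unfolding D_def by auto
  have lam0: "lam > 0" using L0 lamL by linarith
  have "(sqrt (C / D))^2 \<le> lam^2" using lamL(1) L0 by (intro power_mono) auto
  hence sq: "C / D \<le> lam^2" using C0 D0 by simp
  have c1: "C / lam^2 \<le> D"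
    using sq C0 D0 lam0 by (simp add: field_simps)
  have glam: "g lam \<le> g U" using g_mono lam0 lamL U0
    by (intro mono_onD[OF g_mono]) auto
  have c2: "g lam / eps^2 \<le> g U / eps^2" using glam eps by (simp add: divide_right_mono)
  have c3: "g U / eps^2 \<ge> 0" using gU eps by simp
  have "fB eps C g lam \<le> D + g U / eps^2" unfolding fB_def using c1 c2 by linarith
  also have "\<dots> \<le> 2 * fB eps C g U"
  proof -
    have "1 / eps^2 \<ge> 0" by simp
    moreover have "(g U - 1) / eps^2 = g U / eps^2 - 1 / eps^2" by (simp add: diff_divide_distrib)
    ultimately show ?thesis using c3 D1 D_def fB_def[of eps C g U]
      by linarith
  qed
  also have "\<dots> \<le> 2 * (25 * C / lams^2 + g lams / eps^2)" using hU by simp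
  also have "\<dots> \<le> 50 * fB eps C g lams"
  proof -
    have "g lams / eps^2 \<ge> 0" using g_range[of lams] lam_s eps by auto
    thus ?thesis unfolding fB_def by simp
  qed
  finally show "fB eps C g lam \<le> 50 * fB eps C g lams" .
qed

end
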